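(* Let $G \leq \mathrm{Homeo}(\mathbb{S}^1)$ be a group whose action on $\mathbb{S}^1$ is minimal, proximal, and not topologically free. Then $G$ does not admit any faithful $3$-transitive action on a set $\Omega$ with the following two properties: (1) for every $\omega \in \Omega$ the group $G_\omega$ acts minimally and proximally on $\mathbb{S}^1$; (2) for every $\Delta \in \Omega^{\{2\}}$ the action of $G_\Delta$ on $\mathbb{S}^1$ has a unique fixed point $z(\Delta)$, and the action of $G_\Delta$ on $\mathbb{S}^1 \setminus \{z(\Delta)\}$ is minimal.
   Context: An action of a group $H$ on $\mathbb{S}^1$ is minimal if every orbit is dense; proximal if for all open intervals $I, J \subsetneq \mathbb{S}^1$ with $J \neq \emptyset$ there exists $h \in H$ with $h(I) \subset J$; topologically free if the fixed point set of every non-trivial element has empty interior. An action on $\mathbb{S}^1 \setminus \{z\}$ is minimal if every orbit is dense in it. $G_\omega$ is the stabilizer of $\omega$; $\Omega^{\{2\}}$ is the set of unordered pairs of elements of $\Omega$ and $G_\Delta$ the pointwise stabilizer of $\Delta$. $3$-transitive means transitive on ordered triples of distinct elements. *)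

theory Defs
  imports "HOL-Analysis.Analysis" "HOL-Algebra.Group_Action"
begin

definition S1 :: "complex set" where
  "S1 = sphere 0 1"

text \<open>Homeomorphisms of the circle, extended by the identity outside the circle
  (so that composition is the group law and the identity map is the unit).\<close>
definition homeo_S1 :: "(complex \<Rightarrow> complex) set" where
  "homeo_S1 = {f. (\<exists>g. homeomorphism S1 S1 f g) \<and> (\<forall>x. x \<notin> S1 \<longrightarrow> f x = x)}"

definition homeo_grp :: "(complex \<Rightarrow> complex) set \<Rightarrow> (complex \<Rightarrow> complex) monoid" where
  "homeo_grp H = \<lparr>carrier = H, mult = (\<circ>), one = id\<rparr>"

text \<open>Open intervals \<open>I \<subsetneq> S^1\<close>: connected relatively open subsets of the circle
  whose closure is not the whole circle (the empty set included).\<close>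
definition circle_interval :: "complex set \<Rightarrow> bool" where
  "circle_interval I \<longleftrightarrow> I \<subseteq> S1 \<and> openin (top_of_set S1) I \<and> connected I \<and> closure I \<noteq> S1"

definition minimal_on :: "(complex \<Rightarrow> complex) set \<Rightarrow> complex set \<Rightarrow> bool" where
  "minimal_on H X \<longleftrightarrow> (\<forall>x\<in>X. X \<subseteq> closure {h x | h. h \<in> H})"

definition minimal_action :: "(complex \<Rightarrow> complex) set \<Rightarrow> bool" where
  "minimal_action H \<longleftrightarrow> minimal_on H S1"

definition proximal_action :: "(complex \<Rightarrow> complex) set \<Rightarrow> bool" where
  "proximal_action H \<longleftrightarrow>
     (\<forall>I J. circle_interval I \<longrightarrow> circle_interval J \<longrightarrow> J \<noteq> {} \<longrightarrow> (\<exists>h\<in>H. h ` I \<subseteq> J))"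

definition topologically_free :: "(complex \<Rightarrow> complex) set \<Rightarrow> bool" where
  "topologically_free H \<longleftrightarrow>
     (\<forall>h\<in>H. h \<noteq> id \<longrightarrow> (top_of_set S1) interior_of {x \<in> S1. h x = x} = {})"

definition three_transitive ::
    "(complex \<Rightarrow> complex) set \<Rightarrow> ((complex \<Rightarrow> complex) \<Rightarrow> 'w \<Rightarrow> 'w) \<Rightarrow> 'w set \<Rightarrow> bool" where
  "three_transitive H \<phi> \<Omega> \<longleftrightarrow>
     (\<forall>a\<in>\<Omega>. \<forall>b\<in>\<Omega>. \<forall>c\<in>\<Omega>. \<forall>a'\<in>\<Omega>. \<forall>b'\<in>\<Omega>. \<forall>c'\<in>\<Omega>.
        a \<noteq> b \<and> a \<noteq> c \<and> b \<noteq> c \<and> a' \<noteq> b' \<and> a' \<noteq> c' \<and> b' \<noteq> c' \<longrightarrow>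
        (\<exists>h\<in>H. \<phi> h a = a' \<and> \<phi> h b = b' \<and> \<phi> h c = c'))"

definition stab :: "(complex \<Rightarrow> complex) set \<Rightarrow> ((complex \<Rightarrow> complex) \<Rightarrow> 'w \<Rightarrow> 'w) \<Rightarrow> 'w \<Rightarrow> (complex \<Rightarrow> complex) set" where
  "stab H \<phi> w = {h \<in> H. \<phi> h w = w}"

definition pstab :: "(complex \<Rightarrow> complex) set \<Rightarrow> ((complex \<Rightarrow> complex) \<Rightarrow> 'w \<Rightarrow> 'w) \<Rightarrow> 'w set \<Rightarrow> (complex \<Rightarrow> complex) set" where
  "pstab H \<phi> D = {h \<in> H. \<forall>w\<in>D. \<phi> h w = w}"

end

theory Submission imports Defs begin

definition carc :: "complex \<Rightarrow> real \<Rightarrow> complex set" where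
  "carc w c = {x \<in> S1. c < Re (x * cnj w)}"

lemma S1_iff: "x \<in> S1 \<longleftrightarrow> cmod x = 1"
  by (simp add: S1_def)

lemma Re_mult_cnj: "Re (x * cnj w) = Re x * Re w + Im x * Im w"
  by simp

lemma cmod_sq: "cmod x ^ 2 = Re x ^ 2 + Im x ^ 2"
  by (simp add: cmod_def)

lemma dist_S1: assumes "x \<in> S1" "w \<in> S1"
  shows "cmod (x - w) ^ 2 = 2 - 2 * Re (x * cnj w)"
proof -
  have "Re x ^ 2 + Im x ^ 2 = 1" "Re w ^ 2 + Im w ^ 2 = 1"
    using assms cmod_sq[of x] cmod_sq[of w] by (auto simp: S1_iff)
  then show ?thesis using cmod_sq[of "x - w"] by (simp add: power2_eq_square algebra_simps)
qed

lemma Re_cnj_eq1: assumes "x \<in> S1" "w \<in> S1" shows "Re (x * cnj w) = 1 \<longleftrightarrow> x = w"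
proof
  assume "Re (x * cnj w) = 1"
  then have "cmod (x - w) ^ 2 = 0" using dist_S1[OF assms] by (simp del: Re_mult_cnj)
  then show "x = w" by simp
next
  assume "x = w"
  then show "Re (x * cnj w) = 1" using dist_S1[OF assms] by (simp del: Re_mult_cnj)
qed

lemma carc_image:
  assumes w: "w \<in> S1" and c: "-1 \<le> c" "c < 1"
  shows "carc w c = (\<lambda>t. w * cis t) ` {-arccos c<..<arccos c}"
proof -
  define th where "th = arccos c"
  have th: "0 < th" "th \<le> pi" "cos th = c"
    using c arccos_less_arccos[of c 1] arccos[of c] by (auto simp: th_def)
  have wc: "w * cnj w = 1" using w
    by (metis S1_iff complex_norm_square mult.commute of_real_1 power_one)
  show ?thesis
  proof
    show "carc w c \<subseteq> (\<lambda>t. w * cis t) ` {-arccos c<..<arccos c}"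
    proof
      fix x assume x: "x \<in> carc w c"
      define u where "u = x * cnj w"
      have xs: "x \<in> S1" and re: "c < Re u" using x by (auto simp: carc_def u_def)
      have "cmod u = 1" using xs w by (simp add: u_def S1_iff norm_mult)
      then have "u \<noteq> 0" "sgn u = u" by (auto simp: sgn_div_norm)
      then have uc: "cis (Arg u) = u" by (simp add: cis_Arg)
      have "cos (Arg u) = Re u" using arg_cong[OF uc, of Re] by simp
      then have "cos th < cos \<bar>Arg u\<bar>" using re th by simp
      moreover have "0 \<le> \<bar>Arg u\<bar>" "\<bar>Arg u\<bar> \<le> pi" using Arg_bounded[of u] by auto
      ultimately have "\<bar>Arg u\<bar> < th"
        using cos_mono_less_eq[of th "\<bar>Arg u\<bar>"] th by linarith
      moreover have "x = w * cis (Arg u)"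
        using uc wc by (simp add: u_def algebra_simps)
      ultimately show "x \<in> (\<lambda>t. w * cis t) ` {-arccos c<..<arccos c}"
        unfolding th_def[symmetric] by (intro image_eqI[where x="Arg u"]) auto
    qed
  next
    show "(\<lambda>t. w * cis t) ` {-arccos c<..<arccos c} \<subseteq> carc w c"
    proof
      fix x assume "x \<in> (\<lambda>t. w * cis t) ` {-arccos c<..<arccos c}"
      then obtain t where t: "-th < t" "t < th" and x: "x = w * cis t"
        unfolding th_def[symmetric] by auto
      then have t: "\<bar>t\<bar> < th" by simp
      have "x * cnj w = cis t" using x wc by (simp add: algebra_simps)
      then have "Re (x * cnj w) = cos t" by (metis cis.sel(1))
      moreover have "cos th < cos \<bar>t\<bar>"
        using th t by (subst cos_mono_less_eq) auto
      then have "cos th < cos t" by simp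
      moreover have "cmod x = 1" using x w by (simp add: S1_iff norm_mult)
      ultimately show "x \<in> carc w c" using th unfolding carc_def S1_iff by simp
    qed
  qed
qed

lemma carc_connected: "w \<in> S1 \<Longrightarrow> -1 \<le> c \<Longrightarrow> c < 1 \<Longrightarrow> connected (carc w c)"
  unfolding carc_image by (intro connected_continuous_image continuous_intros connected_Ioo)

lemma carc_open: "openin (top_of_set S1) (carc w c)"
proof -
  have "open {x. c < Re (x * cnj w)}"
    by (intro open_Collect_less continuous_intros)
  moreover have "carc w c = S1 \<inter> {x. c < Re (x * cnj w)}" by (auto simp: carc_def)
  ultimately show ?thesis by (simp add: openin_open_Int)
qed

lemma carc_interval:
  assumes w: "w \<in> S1" and c: "-1 < c" "c < 1"
  shows "circle_interval (carc w c)"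
proof -
  have cl: "closed (S1 \<inter> {x. c \<le> Re (x * cnj w)})"
    by (intro closed_Int closed_Collect_le continuous_intros) (simp add: S1_def)
  have "closure (carc w c) \<subseteq> S1 \<inter> {x. c \<le> Re (x * cnj w)}"
    by (rule closure_minimal[OF _ cl]) (auto simp: carc_def)
  moreover have "-w \<in> S1" using w by (simp add: S1_iff)
  moreover have "Re (-w * cnj w) = -1" using Re_cnj_eq1[OF w w] by simp
  ultimately have "-w \<notin> closure (carc w c)" using c by auto
  then have "closure (carc w c) \<noteq> S1" using \<open>-w \<in> S1\<close> by auto
  then show ?thesis unfolding circle_interval_def
    using carc_open carc_connected[OF w] c by (auto simp: carc_def)
qed

lemma carc_mem: "w \<in> S1 \<Longrightarrow> c < 1 \<Longrightarrow> w \<in> carc w c"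
  using Re_cnj_eq1[of w w] by (simp add: carc_def)

lemma S1_minus_conn: assumes "z \<in> S1" shows "connected (S1 - {z})"
proof -
  have "S1 - {z} = carc (-z) (-1)"
  proof -
    { fix x assume x: "x \<in> S1"
      have "Re (x * cnj z) \<le> 1"
        using dist_S1[OF x assms] by (smt (verit) zero_le_power2)
      then have "(x \<noteq> z) = (-1 < Re (x * cnj (-z)))"
        using Re_cnj_eq1[OF x assms] by auto }
    then show ?thesis by (auto simp: carc_def)
  qed
  moreover have "-z \<in> S1" using assms by (simp add: S1_iff)
  ultimately show ?thesis using carc_connected by auto
qed

lemma carc_small:
  assumes "openin (top_of_set S1) V" "w \<in> V"
  shows "\<exists>c. -1 < c \<and> c < 1 \<and> carc w c \<subseteq> V"
proof -
  obtain T where T: "open T" "V = S1 \<inter> T" using assms(1) by (auto simp: openin_open)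
  obtain e where e: "e > 0" "ball w e \<subseteq> T" using T assms(2) open_contains_ball by blast
  define e' where "e' = min e 1"
  define c where "c = 1 - e'^2 / 2"
  have e': "0 < e'" "e' \<le> 1" "e' \<le> e" by (auto simp: e'_def e)
  have "e'^2 \<le> 1" using e' by (simp add: power_le_one)
  then have c: "-1 < c" "c < 1" using e' by (auto simp: c_def)
  have wS: "w \<in> S1" using assms T by auto
  have "carc w c \<subseteq> V"
  proof
    fix x assume "x \<in> carc w c"
    then have x: "x \<in> S1" "c < Re (x * cnj w)" by (auto simp: carc_def)
    then have "cmod (x - w) ^ 2 < e'^2" using dist_S1[OF x(1) wS] by (simp add: c_def)
    then have "cmod (x - w) < e'" using e' by (smt (verit) power_mono norm_ge_zero)
    then have "x \<in> ball w e" using e' by (simp add: dist_norm norm_minus_commute)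
    then show "x \<in> V" using e T x by auto
  qed
  then show ?thesis using c by auto
qed


lemma single_not_open:
  assumes "z0 \<in> S1" shows "\<not> openin (top_of_set S1) {z0}"
proof
  assume o: "openin (top_of_set S1) {z0}"
  have "closedin (top_of_set S1) {z0}" using assms
    by (simp add: closedin_closed_Int[of "{z0}" S1, simplified] Int_absorb1)
  moreover have "connected S1" unfolding S1_def by (rule connected_sphere) simp
  ultimately have "{z0} = S1" using o assms unfolding connected_clopen by blast
  moreover have "-z0 \<in> S1" using assms by (simp add: S1_iff)
  ultimately have "-z0 \<in> {z0}" by simp
  then have "-z0 = z0" by simp
  then have "z0 = 0" by (simp add: complex_eq_iff)
  then show False using assms by (simp add: S1_iff)
qed

lemma open_other:
  assumes "openin (top_of_set S1) V" "V \<noteq> {}"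
  shows "\<exists>v\<in>V. v \<noteq> z0"
proof (rule ccontr)
  assume "\<not> ?thesis"
  then have "V = {z0}" using assms(2) by auto
  moreover have "V \<subseteq> S1" using openin_subset[OF assms(1)] by simp
  ultimately show False using single_not_open assms(1) by auto
qed

lemma homeo_S1_props:
  assumes "f \<in> homeo_S1"
  shows "continuous_on S1 f" "f ` S1 = S1" "inj_on f S1" "\<And>x. x \<notin> S1 \<Longrightarrow> f x = x"
proof -
  obtain g where g: "homeomorphism S1 S1 f g" and off: "\<forall>x. x \<notin> S1 \<longrightarrow> f x = x"
    using assms by (auto simp: homeo_S1_def)
  show "continuous_on S1 f" "f ` S1 = S1" using g by (auto simp: homeomorphism_def)
  show "inj_on f S1" using g by (metis homeomorphism_def inj_on_inverseI)
  show "\<And>x. x \<notin> S1 \<Longrightarrow> f x = x" using off by auto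
qed

lemma boundary:
  assumes g: "g \<in> homeo_S1" "g \<noteq> id"
    and V: "V = top_of_set S1 interior_of {x\<in>S1. g x = x}" "V \<noteq> {}"
    and z0: "z0 \<in> S1"
  shows "\<exists>y\<in>S1 - {z0}. y \<in> closure V \<and> y \<in> closure {s\<in>S1. g s \<noteq> s}"
proof (rule ccontr)
  assume H: "\<not> ?thesis"
  define L where "L = S1 - {z0}"
  define T where "T = V \<inter> L"
  have Vo: "openin (top_of_set S1) V" using V by simp
  have Vsub: "V \<subseteq> {x\<in>S1. g x = x}" unfolding V(1) by (rule interior_of_subset)
  obtain T0 where T0: "open T0" "V = S1 \<inter> T0" using Vo by (auto simp: openin_open)
  have "T = L \<inter> T0" using T0 by (auto simp: T_def L_def)
  then have To: "openin (top_of_set L) T" using T0 by (simp add: openin_open_Int)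
  have cl: "L \<inter> closure V \<subseteq> V"
  proof
    fix y assume y: "y \<in> L \<inter> closure V"
    then have ny: "y \<notin> closure {s\<in>S1. g s \<noteq> s}" using H by (auto simp: L_def)
    define T1 where "T1 = - closure {s\<in>S1. g s \<noteq> s}"
    have "open T1" unfolding T1_def by (rule open_Compl) simp
    have "S1 \<inter> T1 \<subseteq> {x\<in>S1. g x = x}" using closure_subset[of "{s\<in>S1. g s \<noteq> s}"] by (auto simp: T1_def)
    moreover have "openin (top_of_set S1) (S1 \<inter> T1)" using \<open>open T1\<close> by (simp add: openin_open_Int)
    ultimately have "S1 \<inter> T1 \<subseteq> V" unfolding V(1) by (rule interior_of_maximal)
    moreover have "y \<in> S1 \<inter> T1" using y ny by (auto simp: T1_def L_def)
    ultimately show "y \<in> V" by auto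
  qed
  have "T = L \<inter> closure V" using cl closure_subset[of V] by (auto simp: T_def)
  then have Tc: "closedin (top_of_set L) T" by (simp add: closedin_closed_Int)
  have "connected L" unfolding L_def by (rule S1_minus_conn[OF z0])
  then have "T = {} \<or> T = L" using To Tc unfolding connected_clopen by blast
  then show False
  proof
    assume "T = {}"
    then show False using open_other[OF Vo V(2), of z0] Vsub by (auto simp: T_def L_def)
  next
    assume "T = L"
    then have fx: "\<And>x. x \<in> S1 \<Longrightarrow> x \<noteq> z0 \<Longrightarrow> g x = x" using Vsub by (auto simp: T_def L_def)
    have "g z0 = z0"
    proof (rule ccontr)
      assume ne: "g z0 \<noteq> z0"
      have "g z0 \<in> S1" using homeo_S1_props(2)[OF g(1)] z0 by auto
      then have "g (g z0) = g z0" using fx ne by auto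
      then have "g z0 = z0" using inj_onD[OF homeo_S1_props(3)[OF g(1)]] z0 \<open>g z0 \<in> S1\<close> by blast
      then show False using ne by simp
    qed
    then have "\<And>x. g x = x" using fx homeo_S1_props(4)[OF g(1)] by metis
    then show False using g(2) by auto
  qed
qed


locale ctx =
  fixes G :: "(complex \<Rightarrow> complex) set"
    and \<phi> :: "(complex \<Rightarrow> complex) \<Rightarrow> 'w \<Rightarrow> 'w"
    and \<Omega> :: "'w set"
  assumes sub: "subgroup G (homeo_grp homeo_S1)"
    and act: "group_action (homeo_grp G) \<Omega> \<phi>"
    and injphi: "inj_on \<phi> G"
    and tt: "three_transitive G \<phi> \<Omega>"
    and stabs: "\<forall>w\<in>\<Omega>. minimal_action (stab G \<phi> w) \<and> proximal_action (stab G \<phi> w)"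
    and pairs: "\<forall>a\<in>\<Omega>. \<forall>b\<in>\<Omega>. a \<noteq> b \<longrightarrow>
               (\<exists>!z. z \<in> S1 \<and> (\<forall>h\<in>pstab G \<phi> {a, b}. h z = z)) \<and>
               (\<forall>z. z \<in> S1 \<and> (\<forall>h\<in>pstab G \<phi> {a, b}. h z = z) \<longrightarrow>
                  minimal_on (pstab G \<phi> {a, b}) (S1 - {z}))"
begin

lemma hg_simps[simp]: "carrier (homeo_grp H) = H" "mult (homeo_grp H) = (\<circ>)" "one (homeo_grp H) = id"
  by (simp_all add: homeo_grp_def)

lemma grp: "group (homeo_grp G)"
  using act unfolding group_action_def group_hom_def by simp

definition gi where "gi f = inv\<^bsub>homeo_grp G\<^esub> f"

lemma G_homeo: "f \<in> G \<Longrightarrow> f \<in> homeo_S1"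
  using subgroup.subset[OF sub] by auto

lemma gi_G: "f \<in> G \<Longrightarrow> gi f \<in> G"
  using group.inv_closed[OF grp, of f] by (simp add: gi_def)

lemma gi_comp: "f \<in> G \<Longrightarrow> f \<circ> gi f = id" "f \<in> G \<Longrightarrow> gi f \<circ> f = id"
  using group.r_inv[OF grp, of f] group.l_inv[OF grp, of f] by (simp_all add: gi_def)

lemma gi_apply: "f \<in> G \<Longrightarrow> f (gi f x) = x" "f \<in> G \<Longrightarrow> gi f (f x) = x"
  using gi_comp by (metis comp_apply id_apply)+

lemma comp_G: "f \<in> G \<Longrightarrow> g \<in> G \<Longrightarrow> f \<circ> g \<in> G"
  using monoid.m_closed[OF group.is_monoid[OF grp], of f g] by simp

lemma phi_comp: "x \<in> \<Omega> \<Longrightarrow> f \<in> G \<Longrightarrow> g \<in> G \<Longrightarrow> \<phi> (f \<circ> g) x = \<phi> f (\<phi> g x)"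
  using group_action.composition_rule[OF act, of x f g] by simp

lemma phi_in: "x \<in> \<Omega> \<Longrightarrow> f \<in> G \<Longrightarrow> \<phi> f x \<in> \<Omega>"
  using group_action.element_image[OF act, of f x] by simp

lemma phi_id: "x \<in> \<Omega> \<Longrightarrow> \<phi> id x = x"
  using group_action.id_eq_one[OF act] by (metis hg_simps(3) restrict_apply)

lemma phi_gi: "x \<in> \<Omega> \<Longrightarrow> f \<in> G \<Longrightarrow> \<phi> (gi f) (\<phi> f x) = x"
    "x \<in> \<Omega> \<Longrightarrow> f \<in> G \<Longrightarrow> \<phi> f (\<phi> (gi f) x) = x"
  using phi_comp[of x "gi f" f] phi_comp[of x f "gi f"] gi_comp[of f] gi_G[of f] phi_id[of x] by auto

lemma phi_inj: "x \<in> \<Omega> \<Longrightarrow> y \<in> \<Omega> \<Longrightarrow> f \<in> G \<Longrightarrow> \<phi> f x = \<phi> f y \<Longrightarrow> x = y"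
  by (metis phi_gi(1))

lemma mapsS1: "f \<in> G \<Longrightarrow> x \<in> S1 \<Longrightarrow> f x \<in> S1"
  using homeo_S1_props(2)[OF G_homeo] by blast

lemma contS1: "f \<in> G \<Longrightarrow> continuous_on S1 f"
  using homeo_S1_props(1)[OF G_homeo] by blast

lemma fixoff: "f \<in> G \<Longrightarrow> x \<notin> S1 \<Longrightarrow> f x = x"
  using homeo_S1_props(4)[OF G_homeo] by blast

lemma pstab_iff: "h \<in> pstab G \<phi> D \<longleftrightarrow> h \<in> G \<and> (\<forall>w\<in>D. \<phi> h w = w)"
  by (simp add: pstab_def)

lemma stab_iff: "h \<in> stab G \<phi> w \<longleftrightarrow> h \<in> G \<and> \<phi> h w = w"
  by (simp add: stab_def)

definition zz where "zz a b = (THE p. p \<in> S1 \<and> (\<forall>h\<in>pstab G \<phi> {a,b}. h p = p))"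

lemma zz: assumes "a \<in> \<Omega>" "b \<in> \<Omega>" "a \<noteq> b"
  shows "zz a b \<in> S1" "\<And>h. h \<in> pstab G \<phi> {a,b} \<Longrightarrow> h (zz a b) = zz a b"
proof -
  have "\<exists>!z. z \<in> S1 \<and> (\<forall>h\<in>pstab G \<phi> {a, b}. h z = z)" using pairs assms by blast
  from theI'[OF this] show "zz a b \<in> S1" "\<And>h. h \<in> pstab G \<phi> {a,b} \<Longrightarrow> h (zz a b) = zz a b"
    unfolding zz_def by auto
qed

lemma zz_uniq: assumes "a \<in> \<Omega>" "b \<in> \<Omega>" "a \<noteq> b" "p \<in> S1" "\<forall>h\<in>pstab G \<phi> {a,b}. h p = p"
  shows "p = zz a b"
proof -
  have "\<exists>!z. z \<in> S1 \<and> (\<forall>h\<in>pstab G \<phi> {a, b}. h z = z)" using pairs assms by blast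
  from the1_equality[OF this] show ?thesis using assms unfolding zz_def by auto
qed

lemma zz_sym: "zz a b = zz b a"
  unfolding zz_def by (simp add: insert_commute)

lemma zz_min: assumes "a \<in> \<Omega>" "b \<in> \<Omega>" "a \<noteq> b"
  shows "minimal_on (pstab G \<phi> {a, b}) (S1 - {zz a b})"
  using pairs assms zz[OF assms] by blast

lemma zz_equiv: assumes k: "k \<in> G" and ab: "a \<in> \<Omega>" "b \<in> \<Omega>" "a \<noteq> b"
  shows "k (zz a b) = zz (\<phi> k a) (\<phi> k b)"
proof (rule zz_uniq)
  show a': "\<phi> k a \<in> \<Omega>" "\<phi> k b \<in> \<Omega>" using ab k phi_in by auto
  show "\<phi> k a \<noteq> \<phi> k b" using phi_inj ab k by blast
  show "k (zz a b) \<in> S1" using mapsS1 k zz(1)[OF ab] by blast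
  show "\<forall>h\<in>pstab G \<phi> {\<phi> k a, \<phi> k b}. h (k (zz a b)) = k (zz a b)"
  proof
    fix h assume h: "h \<in> pstab G \<phi> {\<phi> k a, \<phi> k b}"
    then have hG: "h \<in> G" and ha: "\<phi> h (\<phi> k a) = \<phi> k a" and hb: "\<phi> h (\<phi> k b) = \<phi> k b"
      by (auto simp: pstab_iff)
    have hkG: "h \<circ> k \<in> G" using comp_G hG k by blast
    have G': "gi k \<circ> (h \<circ> k) \<in> G" using comp_G gi_G k hkG by blast
    have "\<phi> (gi k \<circ> (h \<circ> k)) a = a"
      using phi_comp[OF ab(1) gi_G[OF k] hkG] phi_comp[OF ab(1) hG k] ha phi_gi(1)[OF ab(1) k] by simp
    moreover have "\<phi> (gi k \<circ> (h \<circ> k)) b = b"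
      using phi_comp[OF ab(2) gi_G[OF k] hkG] phi_comp[OF ab(2) hG k] hb phi_gi(1)[OF ab(2) k] by simp
    ultimately have "gi k \<circ> (h \<circ> k) \<in> pstab G \<phi> {a,b}" using G' by (simp add: pstab_iff)
    then have "gi k (h (k (zz a b))) = zz a b" using zz(2)[OF ab] by fastforce
    then have "k (gi k (h (k (zz a b)))) = k (zz a b)" by simp
    then show "h (k (zz a b)) = k (zz a b)" using gi_apply(1)[OF k] by simp
  qed
qed

lemma zz_inj: assumes abc: "a \<in> \<Omega>" "b \<in> \<Omega>" "c \<in> \<Omega>" "a \<noteq> b" "a \<noteq> c" "b \<noteq> c"
  shows "zz a b \<noteq> zz a c"
proof
  assume eq: "zz a b = zz a c"
  define p where "p = zz a b"
  have pS: "p \<in> S1" using zz(1)[of a b] abc by (simp add: p_def)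
  have all: "\<forall>h\<in>stab G \<phi> a. h p = p"
  proof
    fix h assume "h \<in> stab G \<phi> a"
    then have hG: "h \<in> G" and ha: "\<phi> h a = a" by (auto simp: stab_iff)
    define b' where "b' = \<phi> h b"
    have b'O: "b' \<in> \<Omega>" using phi_in abc hG by (simp add: b'_def)
    have b'a: "b' \<noteq> a" using phi_inj[of b a h] abc ha hG by (auto simp: b'_def)
    have hp: "h p = zz a b'" using zz_equiv[OF hG abc(1,2,4)] ha by (simp add: p_def b'_def)
    show "h p = p"
    proof (cases "b' = b")
      case True then show ?thesis using hp by (simp add: p_def)
    next
      case False
      obtain k where k: "k \<in> G" "\<phi> k a = a" "\<phi> k b = b" "\<phi> k c = b'"
        using tt[unfolded three_transitive_def, rule_format, OF abc(1,2,3) abc(1,2) b'O] abc b'a False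
        by auto
      have "k \<in> pstab G \<phi> {a,b}" using k by (simp add: pstab_iff)
      then have "k p = p" using zz(2)[of a b k] abc by (simp add: p_def)
      moreover have "k p = zz a b'" using zz_equiv[OF k(1) abc(1,3,5)] k eq by (simp add: p_def)
      ultimately show ?thesis using hp by simp
    qed
  qed
  have "minimal_on (stab G \<phi> a) S1" using stabs abc by (simp add: minimal_action_def)
  then have "S1 \<subseteq> closure {h p | h. h \<in> stab G \<phi> a}" using pS by (simp add: minimal_on_def)
  also have "closure {h p | h. h \<in> stab G \<phi> a} \<subseteq> closure {p}"
    by (rule closure_mono) (use all in auto)
  finally have "S1 \<subseteq> {p}" by simp
  moreover have "-p \<in> S1" using pS by (simp add: S1_iff)
  ultimately have "-p = p" by auto
  then have "p = 0" by (simp add: complex_eq_iff)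
  then show False using pS by (simp add: S1_iff)
qed

lemma zz_dense: assumes a: "a \<in> \<Omega>" "b \<in> \<Omega>" "b \<noteq> a"
    and O: "openin (top_of_set S1) Op" "Op \<noteq> {}"
  shows "\<exists>c\<in>\<Omega>. c \<noteq> a \<and> zz a c \<in> Op"
proof -
  define p where "p = zz a b"
  have pS: "p \<in> S1" using zz(1)[of a b] a by (simp add: p_def)
  have "minimal_on (stab G \<phi> a) S1" using stabs a by (simp add: minimal_action_def)
  then have cl: "S1 \<subseteq> closure {h p | h. h \<in> stab G \<phi> a}" using pS by (simp add: minimal_on_def)
  obtain T where T: "open T" "Op = S1 \<inter> T" using O(1) by (auto simp: openin_open)
  obtain o1 where "o1 \<in> Op" using O(2) by auto
  then have "o1 \<in> T \<inter> closure {h p | h. h \<in> stab G \<phi> a}" using cl T by auto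
  then have "T \<inter> {h p | h. h \<in> stab G \<phi> a} \<noteq> {}" using open_Int_closure_eq_empty[OF T(1)] by blast
  then obtain h where h: "h \<in> stab G \<phi> a" "h p \<in> T" by auto
  then have hG: "h \<in> G" and ha: "\<phi> h a = a" by (auto simp: stab_iff)
  have "h p \<in> Op" using T h mapsS1[OF hG pS] by auto
  moreover have "h p = zz a (\<phi> h b)" using zz_equiv[OF hG a(1,2)] a(3) ha by (simp add: p_def)
  moreover have "\<phi> h b \<noteq> a" using phi_inj[of b a h] a ha hG by auto
  moreover have "\<phi> h b \<in> \<Omega>" using phi_in a hG by auto
  ultimately show ?thesis by metis
qed

lemma moved: assumes "f \<in> G" "f \<noteq> id" shows "\<exists>a\<in>\<Omega>. \<phi> f a \<noteq> a"
proof (rule ccontr)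
  assume "\<not> ?thesis"
  then have "\<forall>a\<in>\<Omega>. \<phi> f a = a" by auto
  moreover have "\<phi> f \<in> extensional \<Omega>"
    using group_action.bij_prop0[OF act, of f] assms by (simp add: Bij_def)
  moreover have "\<phi> id \<in> extensional \<Omega>"
    using group_action.bij_prop0[OF act, of id] monoid.one_closed[OF group.is_monoid[OF grp]]
    by (simp add: Bij_def)
  ultimately have "\<phi> f = \<phi> id" using phi_id by (intro extensionalityI) auto
  moreover have "id \<in> G" using monoid.one_closed[OF group.is_monoid[OF grp]] by simp
  ultimately have "f = id" using injphi assms(1) by (meson inj_onD)
  then show False using assms by simp
qed

lemma supp_open: assumes "f \<in> G" shows "openin (top_of_set S1) {x\<in>S1. f x \<noteq> x}"
proof -
  have "openin (top_of_set S1) (S1 \<inter> (\<lambda>x. f x - x) -` (-{0}))"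
    by (rule continuous_openin_preimage[where T=UNIV])
      (auto intro!: continuous_on_diff[OF contS1[OF assms] continuous_on_id])
  moreover have "S1 \<inter> (\<lambda>x. f x - x) -` (-{0}) = {x\<in>S1. f x \<noteq> x}" by auto
  ultimately show ?thesis by simp
qed

lemma supp_ne: assumes "f \<in> G" "f \<noteq> id" shows "{x\<in>S1. f x \<noteq> x} \<noteq> {}"
proof
  assume "{x\<in>S1. f x \<noteq> x} = {}"
  then have "\<And>x. f x = x" using fixoff[OF assms(1)] by blast
  then show False using assms(2) by auto
qed


lemma exists_other: assumes "f \<in> G" "f \<noteq> id" "a \<in> \<Omega>" "\<phi> f a = a"
  shows "\<exists>b\<in>\<Omega>. b \<noteq> a"
  using moved[OF assms(1,2)] assms(4) by metis

lemma final:
  assumes a: "a \<in> \<Omega>" and g1: "g1 \<in> stab G \<phi> a" "g1 \<noteq> id" and g2: "g2 \<in> stab G \<phi> a" "g2 \<noteq> id"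
    and disj: "\<forall>x\<in>S1. g1 x = x \<or> g2 x = x"
  shows False
proof -
  have g1G: "g1 \<in> G" and g1a: "\<phi> g1 a = a" using g1 by (auto simp: stab_iff)
  have g2G: "g2 \<in> G" and g2a: "\<phi> g2 a = a" using g2 by (auto simp: stab_iff)
  obtain b where b: "b \<in> \<Omega>" "b \<noteq> a" using exists_other[OF g1G g1(2) a g1a] by blast
  obtain u where u: "u \<in> \<Omega>" "u \<noteq> a" "zz a u \<in> {x\<in>S1. g1 x \<noteq> x}"
    using zz_dense[OF a b supp_open[OF g1G] supp_ne[OF g1G g1(2)]] by blast
  obtain v where v: "v \<in> \<Omega>" "v \<noteq> a" "zz a v \<in> {x\<in>S1. g2 x \<noteq> x}"
    using zz_dense[OF a b supp_open[OF g2G] supp_ne[OF g2G g2(2)]] by blast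
  have g1u: "\<phi> g1 u \<noteq> u"
  proof
    assume "\<phi> g1 u = u"
    then have "g1 (zz a u) = zz a u" using zz_equiv[OF g1G a u(1)] u(2) g1a by simp
    then show False using u(3) by simp
  qed
  have g2u: "\<phi> g2 u = u"
  proof (rule ccontr)
    assume ne: "\<phi> g2 u \<noteq> u"
    have "g2 (zz a u) = zz a u" using disj u(3) by auto
    moreover have "g2 (zz a u) = zz a (\<phi> g2 u)" using zz_equiv[OF g2G a u(1)] u(2) g2a by simp
    moreover have "\<phi> g2 u \<noteq> a" using phi_inj[of u a g2] u a g2a g2G by auto
    moreover have "\<phi> g2 u \<in> \<Omega>" using phi_in u g2G by auto
    ultimately show False using zz_inj[of a u "\<phi> g2 u"] a u ne by auto
  qed
  have g2v: "\<phi> g2 v \<noteq> v"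
  proof
    assume "\<phi> g2 v = v"
    then have "g2 (zz a v) = zz a v" using zz_equiv[OF g2G a v(1)] v(2) g2a by simp
    then show False using v(3) by simp
  qed
  have g1v: "\<phi> g1 v = v"
  proof (rule ccontr)
    assume ne: "\<phi> g1 v \<noteq> v"
    have "g1 (zz a v) = zz a v" using disj v(3) by auto
    moreover have "g1 (zz a v) = zz a (\<phi> g1 v)" using zz_equiv[OF g1G a v(1)] v(2) g1a by simp
    moreover have "\<phi> g1 v \<noteq> a" using phi_inj[of v a g1] v a g1a g1G by auto
    moreover have "\<phi> g1 v \<in> \<Omega>" using phi_in v g1G by auto
    ultimately show False using zz_inj[of a v "\<phi> g1 v"] a v ne by auto
  qed
  have uv: "u \<noteq> v" using g1u g1v by auto
  have v'O: "\<phi> g2 v \<in> \<Omega>" using phi_in v g2G by auto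
  have v'u: "\<phi> g2 v \<noteq> u" using phi_inj[of v u g2] u v g2u g2G uv by auto
  have "g2 (zz u v) = zz u (\<phi> g2 v)" using zz_equiv[OF g2G u(1) v(1) uv] g2u by simp
  also have "\<dots> \<noteq> zz u v" using zz_inj[of u "\<phi> g2 v" v] u v v'O v'u g2v uv by auto
  finally have "g2 (zz u v) \<noteq> zz u v" .
  moreover have "zz u v \<in> S1" using zz(1)[OF u(1) v(1) uv] .
  ultimately have fix1: "g1 (zz u v) = zz u v" using disj by auto
  have u'O: "\<phi> g1 u \<in> \<Omega>" using phi_in u g1G by auto
  have u'v: "\<phi> g1 u \<noteq> v" using phi_inj[of u v g1] u v g1v g1G uv by auto
  have "g1 (zz v u) = zz v (\<phi> g1 u)" using zz_equiv[OF g1G v(1) u(1)] uv g1v by simp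
  also have "\<dots> \<noteq> zz v u" using zz_inj[of v "\<phi> g1 u" u] u v u'O u'v g1u uv by auto
  finally show False using fix1 zz_sym[of u v] by simp
qed

lemma step3:
  assumes a: "a \<in> \<Omega>" and h: "h \<in> stab G \<phi> a" "h \<noteq> id"
    and W: "openin (top_of_set S1) W" "W \<noteq> {}" "\<forall>x\<in>W. h x = x"
  shows False
proof -
  have hG: "h \<in> G" and ha: "\<phi> h a = a" using h by (auto simp: stab_iff)
  obtain w where w: "w \<in> W" using W(2) by auto
  have wS: "w \<in> S1" using w openin_subset[OF W(1)] by auto
  obtain c where c: "-1 < c" "c < 1" "carc w c \<subseteq> W" using carc_small[OF W(1) w] by blast
  define c' where "c' = (c + 1) / 2"
  have c': "c < c'" "c' < 1" using c by (auto simp: c'_def)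
  define I where "I = carc (-w) (-c')"
  define J where "J = carc w c"
  have mwS: "-w \<in> S1" using wS by (simp add: S1_iff)
  have "circle_interval I" unfolding I_def by (rule carc_interval[OF mwS]) (use c c' in auto)
  moreover have "circle_interval J" unfolding J_def by (rule carc_interval[OF wS c(1,2)])
  moreover have "J \<noteq> {}" using carc_mem[OF wS c(2)] by (auto simp: J_def)
  moreover have "proximal_action (stab G \<phi> a)" using stabs a by blast
  ultimately obtain k where k: "k \<in> stab G \<phi> a" "k ` I \<subseteq> J"
    unfolding proximal_action_def by blast
  have kG: "k \<in> G" and ka: "\<phi> k a = a" using k by (auto simp: stab_iff)
  have notJ: "x \<in> S1 \<Longrightarrow> h x \<noteq> x \<Longrightarrow> x \<in> I" for x
  proof -
    assume x: "x \<in> S1" "h x \<noteq> x"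
    then have "x \<notin> J" using W(3) c(3) by (auto simp: J_def)
    then have "Re (x * cnj w) \<le> c" using x by (auto simp: J_def carc_def)
    then show "x \<in> I" using x c' by (auto simp: I_def carc_def)
  qed
  define g2 where "g2 = k \<circ> (h \<circ> gi k)"
  have g2G: "g2 \<in> G" unfolding g2_def using comp_G gi_G kG hG by blast
  have "\<phi> g2 a = a"
  proof -
    have "\<phi> (gi k) a = a" using phi_gi(1)[OF a kG] ka by simp
    then show ?thesis unfolding g2_def
      using phi_comp[OF a kG comp_G[OF hG gi_G[OF kG]]] phi_comp[OF a hG gi_G[OF kG]] ha ka by simp
  qed
  then have g2s: "g2 \<in> stab G \<phi> a" using g2G by (simp add: stab_iff)
  have g2n: "g2 \<noteq> id"
  proof
    assume "g2 = id"
    then have "\<And>x. k (h (gi k x)) = x" unfolding g2_def by (metis comp_apply id_apply)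
    then have "\<And>y. h y = y" by (metis gi_apply kG)
    then show False using h(2) by auto
  qed
  have disj: "\<forall>x\<in>S1. h x = x \<or> g2 x = x"
  proof
    fix x assume x: "x \<in> S1"
    show "h x = x \<or> g2 x = x"
    proof (cases "h x = x")
      case True then show ?thesis by simp
    next
      case False
      then have xI: "x \<in> I" using notJ x by auto
      define y where "y = gi k x"
      have yS: "y \<in> S1" using mapsS1[OF gi_G[OF kG] x] by (simp add: y_def)
      have ky: "k y = x" using gi_apply(1)[OF kG] by (simp add: y_def)
      have "h y = y"
      proof (rule ccontr)
        assume "h y \<noteq> y"
        then have "y \<in> I" using notJ yS by auto
        then have "x \<in> J" using k(2) ky by auto
        then have "h x = x" using W(3) c(3) by (auto simp: J_def)
        then show False using False by simp
      qed
      then have "g2 x = x" unfolding g2_def using ky by (simp add: y_def[symmetric])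
      then show ?thesis by simp
    qed
  qed
  show False by (rule final[OF a h g2s g2n disj])
qed


lemma step2:
  assumes gG: "g \<in> G" and gn: "g \<noteq> id"
    and V: "V = top_of_set S1 interior_of {x\<in>S1. g x = x}" "V \<noteq> {}"
  shows "\<exists>a\<in>\<Omega>. \<exists>h\<in>stab G \<phi> a. h \<noteq> id \<and>
           (\<exists>W. openin (top_of_set S1) W \<and> W \<noteq> {} \<and> (\<forall>x\<in>W. h x = x))"
proof -
  have Vo: "openin (top_of_set S1) V" using V by simp
  have Vsub: "V \<subseteq> {x\<in>S1. g x = x}" unfolding V(1) by (rule interior_of_subset)
  show ?thesis
  proof (cases "\<exists>a\<in>\<Omega>. \<phi> g a = a")
    case True
    then obtain a where "a \<in> \<Omega>" "\<phi> g a = a" by blast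
    then show ?thesis using gG gn Vo V(2) Vsub by (intro bexI[of _ a] bexI[of _ g]) (auto simp: stab_iff)
  next
    case False
    obtain a where a: "a \<in> \<Omega>" using moved[OF gG gn] by blast
    then have ga: "\<phi> g a \<noteq> a" using False by blast
    define a2 where "a2 = \<phi> (gi g) a"
    have a2O: "a2 \<in> \<Omega>" using phi_in[OF a gi_G[OF gG]] by (simp add: a2_def)
    have ga2: "\<phi> g a2 = a" using phi_gi(2)[OF a gG] by (simp add: a2_def)
    have a2a: "a \<noteq> a2" using ga ga2 by auto
    define H where "H = pstab G \<phi> {a, a2}"
    define z0 where "z0 = zz a a2"
    have z0S: "z0 \<in> S1" using zz(1)[OF a a2O a2a] by (simp add: z0_def)
    have minH: "minimal_on H (S1 - {z0})" using zz_min[OF a a2O a2a] by (simp add: H_def z0_def)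
    obtain y where y: "y \<in> S1 - {z0}" "y \<in> closure V" "y \<in> closure {s\<in>S1. g s \<noteq> s}"
      using boundary[OF G_homeo[OF gG] gn V z0S] by blast
    obtain v0 where v0: "v0 \<in> V" "v0 \<noteq> z0" using open_other[OF Vo V(2)] by blast
    have "v0 \<in> closure {k y | k. k \<in> H}" using minH y(1) v0 Vsub unfolding minimal_on_def by blast
    obtain T0 where T0: "open T0" "V = S1 \<inter> T0" using Vo by (auto simp: openin_open)
    have "v0 \<in> T0 \<inter> closure {k y | k. k \<in> H}" using T0 v0 \<open>v0 \<in> closure _\<close> by auto
    then have "T0 \<inter> {k y | k. k \<in> H} \<noteq> {}" using open_Int_closure_eq_empty[OF T0(1)] by blast
    then obtain k where k: "k \<in> H" "k y \<in> T0" by auto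
    have kG: "k \<in> G" and ka: "\<phi> k a = a" and ka2: "\<phi> k a2 = a2" using k(1) by (auto simp: H_def pstab_iff)
    have kyV: "k y \<in> V" using T0 k(2) mapsS1[OF kG] y(1) by auto
    have "openin (top_of_set S1) (S1 \<inter> k -` V)"
      by (rule continuous_openin_preimage[OF contS1[OF kG] _ Vo]) (use mapsS1[OF kG] in auto)
    then obtain T' where T': "open T'" "S1 \<inter> k -` V = S1 \<inter> T'" by (auto simp: openin_open)
    have yT: "y \<in> T'" using T' y(1) kyV by auto
    have "T' \<inter> V \<noteq> {}" using open_Int_closure_eq_empty[OF T'(1), of V] y(2) yT by auto
    then obtain v where v: "v \<in> V" "v \<in> T'" by auto
    have kv: "k v \<in> V" using T' v Vsub by auto
    have "T' \<inter> {s\<in>S1. g s \<noteq> s} \<noteq> {}" using open_Int_closure_eq_empty[OF T'(1)] y(3) yT by blast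
    then obtain s where s: "s \<in> S1" "g s \<noteq> s" "s \<in> T'" by auto
    have ks: "k s \<in> V" using T' s by auto
    define h where "h = g \<circ> (k \<circ> (gi g \<circ> gi k))"
    have hG: "h \<in> G" unfolding h_def using comp_G gi_G gG kG by metis
    have "\<phi> h a = a"
    proof -
      have 1: "\<phi> (gi k) a = a" using phi_gi(1)[OF a kG] ka by simp
      have 2: "\<phi> (gi g \<circ> gi k) a = a2"
        using phi_comp[OF a gi_G[OF gG] gi_G[OF kG]] 1 by (simp add: a2_def)
      have 3: "\<phi> (k \<circ> (gi g \<circ> gi k)) a = a2"
        using phi_comp[OF a kG comp_G[OF gi_G[OF gG] gi_G[OF kG]]] 2 ka2 by simp
      show ?thesis unfolding h_def
        using phi_comp[OF a gG comp_G[OF kG comp_G[OF gi_G[OF gG] gi_G[OF kG]]]] 3 ga2 by simp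
    qed
    then have hs: "h \<in> stab G \<phi> a" using hG by (simp add: stab_iff)
    define W where "W = V \<inter> (S1 \<inter> gi k -` V)"
    have Wo: "openin (top_of_set S1) W" unfolding W_def
      by (intro openin_Int Vo continuous_openin_preimage[OF contS1[OF gi_G[OF kG]] _ Vo])
        (use mapsS1[OF gi_G[OF kG]] in auto)
    have "k v \<in> W" using kv v Vsub gi_apply(2)[OF kG] by (auto simp: W_def)
    then have Wn: "W \<noteq> {}" by auto
    have Wfix: "\<forall>x\<in>W. h x = x"
    proof
      fix x assume x: "x \<in> W"
      then have "gi k x \<in> V" "x \<in> V" by (auto simp: W_def)
      then have 1: "g (gi k x) = gi k x" "g x = x" using Vsub by auto
      have "gi g (gi k x) = gi k x" using gi_apply(2)[OF gG, of "gi k x"] 1(1) by simp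
      then show "h x = x" unfolding h_def using gi_apply(1)[OF kG] 1(2) by simp
    qed
    have hn: "h \<noteq> id"
    proof
      assume "h = id"
      then have "h (k s) = k s" by simp
      then have e1: "g (k (gi g s)) = k s" unfolding h_def using gi_apply(2)[OF kG] by simp
      have "g (k s) = k s" using ks Vsub by auto
      then have "g (k (gi g s)) = g (k s)" using e1 by simp
      then have "k (gi g s) = k s" by (metis gi_apply(2)[OF gG])
      then have "gi g s = s" by (metis gi_apply(2)[OF kG])
      then have "g s = s" by (metis gi_apply(1)[OF gG])
      then show False using s(2) by simp
    qed
    show ?thesis using a hs hn Wo Wn Wfix by blast
  qed
qed

lemma contradiction:
  assumes ntf: "\<not> topologically_free G" shows False
proof -
  obtain g where g: "g \<in> G" "g \<noteq> id" "top_of_set S1 interior_of {x \<in> S1. g x = x} \<noteq> {}"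
    using ntf unfolding topologically_free_def by blast
  obtain a h W where "a \<in> \<Omega>" "h \<in> stab G \<phi> a" "h \<noteq> id"
    "openin (top_of_set S1) W" "W \<noteq> {}" "\<forall>x\<in>W. h x = x"
    using step2[OF g(1,2) refl g(3)] by blast
  then show False using step3 by blast
qed

end

theorem proposition4p10:
  fixes G :: "(complex \<Rightarrow> complex) set"
    and \<phi> :: "(complex \<Rightarrow> complex) \<Rightarrow> 'w \<Rightarrow> 'w"
    and \<Omega> :: "'w set"
  assumes "subgroup G (homeo_grp homeo_S1)"
    and "minimal_action G"
    and "proximal_action G"
    and "\<not> topologically_free G"
  shows "\<not> (group_action (homeo_grp G) \<Omega> \<phi> \<and> inj_on \<phi> G \<and> three_transitive G \<phi> \<Omega> \<and>
            (\<forall>w\<in>\<Omega>. minimal_action (stab G \<phi> w) \<and> proximal_action (stab G \<phi> w)) \<and>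
            (\<forall>a\<in>\<Omega>. \<forall>b\<in>\<Omega>. a \<noteq> b \<longrightarrow>
               (\<exists>!z. z \<in> S1 \<and> (\<forall>h\<in>pstab G \<phi> {a, b}. h z = z)) \<and>
               (\<forall>z. z \<in> S1 \<and> (\<forall>h\<in>pstab G \<phi> {a, b}. h z = z) \<longrightarrow>
                  minimal_on (pstab G \<phi> {a, b}) (S1 - {z}))))"
proof
  assume H: "group_action (homeo_grp G) \<Omega> \<phi> \<and> inj_on \<phi> G \<and> three_transitive G \<phi> \<Omega> \<and>
            (\<forall>w\<in>\<Omega>. minimal_action (stab G \<phi> w) \<and> proximal_action (stab G \<phi> w)) \<and>
            (\<forall>a\<in>\<Omega>. \<forall>b\<in>\<Omega>. a \<noteq> b \<longrightarrow>
               (\<exists>!z. z \<in> S1 \<and> (\<forall>h\<in>pstab G \<phi> {a, b}. h z = z)) \<and>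
               (\<forall>z. z \<in> S1 \<and> (\<forall>h\<in>pstab G \<phi> {a, b}. h z = z) \<longrightarrow>
                  minimal_on (pstab G \<phi> {a, b}) (S1 - {z})))"
  interpret ctx G \<phi> \<Omega>
    by (rule ctx.intro) (use assms(1) H in blast)+
  show False by (rule contradiction[OF assms(4)])
qed

end
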